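(* Let $\mathbf{s}$ be a linearly recurrent sequence over $\{0,1\}$. Then for every integer $k\ge1$, $C_{2k}(\mathbf{s},N)\gg N$, i.e., there is a constant $c>0$ (depending on $\mathbf{s}$ and $k$) such that $C_{2k}(\mathbf{s},N)\ge cN$ for all sufficiently large $N$.
   Context: A sequence $\mathbf{s}$ is linearly recurrent if there is a constant $C>0$ such that every factor (finite block) of $\mathbf{s}$ occurs infinitely often and the distance between two consecutive occurrences of any length-$n$ factor of $\mathbf{s}$ is at most $Cn$. Correlation measure: for $\mathbf{s}$ over $\{0,1\}$, an integer $k\ge1$, $D=(d_1,\dots,d_k)\in\mathbb{N}^k$ with $0\le d_1<\cdots<d_k$ and $M\in\mathbb{N}$, put $V(\mathbf{s},M,D)=\sum_{n=0}^{M-1}(-1)^{\mathbf{s}(n+d_1)+\cdots+\mathbf{s}(n+d_k)}$, and $C_k(\mathbf{s},N)=\max_{M,D}|V(\mathbf{s},M,D)|$ over all such $D$ and integers $M$ with $M+d_k\le N$. *)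

theory Defs
  imports Complex_Main
begin

definition factor :: "(nat \<Rightarrow> nat) \<Rightarrow> nat \<Rightarrow> nat \<Rightarrow> nat list" where
  "factor s i n = map (\<lambda>j. s (i + j)) [0..<n]"

definition linearly_recurrent :: "(nat \<Rightarrow> nat) \<Rightarrow> bool" where
  "linearly_recurrent s \<longleftrightarrow>
     (\<exists>C::real. C > 0 \<and>
        (\<forall>i n. infinite {j. factor s j n = factor s i n}) \<and>
        (\<forall>n i j. n \<ge> 1 \<and> i < j \<and> factor s j n = factor s i n \<and>
                 (\<forall>l. i < l \<and> l < j \<longrightarrow> factor s l n \<noteq> factor s i n)
                 \<longrightarrow> real (j - i) \<le> C * real n))"

definition corrV :: "(nat \<Rightarrow> nat) \<Rightarrow> nat \<Rightarrow> nat list \<Rightarrow> int" where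
  "corrV s M D = (\<Sum>n<M. (-1::int) ^ (\<Sum>d\<leftarrow>D. s (n + d)))"

text \<open>C_k(s,N): maximum of |V(s,M,D)| over strictly increasing D of length k
  and M with M + d_k \<le> N (0 added so the max is over a nonempty set; harmless
  since all values are \<ge> 0).\<close>
definition corr_measure :: "nat \<Rightarrow> (nat \<Rightarrow> nat) \<Rightarrow> nat \<Rightarrow> int" where
  "corr_measure k s N = Max ({\<bar>corrV s M D\<bar> | M D.
       length D = k \<and> sorted_wrt (<) D \<and> M + last D \<le> N} \<union> {0})"

end

theory Submission
  imports Defs
begin

lemma period_mult:
  fixes s :: "nat \<Rightarrow> nat" and m p x r :: nat
  assumes "\<forall>x<m. s x = s (x + p)"
  shows "x + r * p < m \<Longrightarrow> s x = s (x + (Suc r) * p)"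
proof (induction r arbitrary: x)
  case 0 then have "x < m" by simp
  then have "s x = s (x + p)" using assms by blast
  then show ?case by simp
next
  case (Suc r)
  have "x < m" using Suc.prems by simp
  then have "s x = s (x + p)" using assms by blast
  also have "\<dots> = s (x + p + Suc r * p)"
  proof -
    have "x + p + r * p < m" using Suc.prems by (simp add: algebra_simps)
    then show ?thesis by (rule Suc.IH)
  qed
  also have "x + p + Suc r * p = x + Suc (Suc r) * p" by simp
  finally show ?case .
qed

lemma choose_t:
  fixes s :: "nat \<Rightarrow> nat" and m p k :: nat
  assumes "\<forall>x<m. s x = s (x + p)" "k \<ge> 1" "p \<ge> 1"
  shows "\<exists>t. k \<le> t \<and> t \<le> k * p \<and> (\<forall>x. x + k * k < m \<longrightarrow> s x = s (x + t))"
proof (cases "k \<le> p")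
  case True
  have "1 * p \<le> k * p" using assms(2) by simp
  then have "p \<le> k * p" by simp
  moreover have "\<forall>x. x + k * k < m \<longrightarrow> s x = s (x + p)"
  proof (intro allI impI)
    fix x assume "x + k * k < m"
    then have "x < m" by simp
    then show "s x = s (x + p)" using assms(1) by blast
  qed
  ultimately show ?thesis using True by blast
next
  case False
  have kp: "(k - 1) * p \<le> k * k" using False
    by (intro mult_le_mono) auto
  have sk: "Suc (k - 1) = k" using assms(2) by simp
  have "\<forall>x. x + k * k < m \<longrightarrow> s x = s (x + k * p)"
  proof (intro allI impI)
    fix x assume "x + k * k < m"
    then have "x + (k - 1) * p < m" using kp by linarith
    from period_mult[OF assms(1) this] show "s x = s (x + k * p)" using sk by simp
  qed
  moreover have "k \<le> k * p" using False assms(3) by simp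
  ultimately show ?thesis by blast
qed

lemma corrV_le: "\<bar>corrV s M D\<bar> \<le> int M"
proof -
  have "\<bar>corrV s M D\<bar> \<le> (\<Sum>n<M. \<bar>(-1::int) ^ (\<Sum>d\<leftarrow>D. s (n + d))\<bar>)"
    unfolding corrV_def by (rule sum_abs)
  also have "\<dots> = int M" by simp
  finally show ?thesis .
qed

lemma corr_ge:
  assumes "length D = k" "sorted_wrt (<) D" "M + last D \<le> N"
  shows "\<bar>corrV s M D\<bar> \<le> corr_measure k s N"
proof -
  let ?S = "{\<bar>corrV s M D\<bar> | M D. length D = k \<and> sorted_wrt (<) D \<and> M + last D \<le> N} \<union> {0}"
  have "?S \<subseteq> {0..int N}"
  proof
    fix x assume "x \<in> ?S"
    then show "x \<in> {0..int N}"
    proof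
      assume "x \<in> {\<bar>corrV s M D\<bar> | M D. length D = k \<and> sorted_wrt (<) D \<and> M + last D \<le> N}"
      then obtain M' D' where "x = \<bar>corrV s M' D'\<bar>" "M' + last D' \<le> N" by blast
      then show ?thesis using corrV_le[of s M' D'] by auto
    qed auto
  qed
  then have "finite ?S" by (rule finite_subset) simp
  moreover have "\<bar>corrV s M D\<bar> \<in> ?S" using assms by blast
  ultimately show ?thesis unfolding corr_measure_def by (rule Max_ge)
qed

theorem mainTheorem2:
  fixes s :: "nat \<Rightarrow> nat" and k :: nat
  assumes "\<forall>n. s n \<in> {0, 1}"
    and "linearly_recurrent s"
    and "k \<ge> 1"
  shows "\<exists>c::real. c > 0 \<and> (\<exists>N0. \<forall>N\<ge>N0. real_of_int (corr_measure (2 * k) s N) \<ge> c * real N)"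
proof -
  obtain C :: real where Cpos: "C > 0"
    and inf: "\<forall>i n. infinite {j. factor s j n = factor s i n}"
    and rec: "\<forall>n i j. n \<ge> 1 \<and> i < j \<and> factor s j n = factor s i n \<and>
                 (\<forall>l. i < l \<and> l < j \<longrightarrow> factor s l n \<noteq> factor s i n)
                 \<longrightarrow> real (j - i) \<le> C * real n"
    using assms(2) unfolding linearly_recurrent_def by blast
  define K where "K = nat \<lceil>C\<rceil>"
  have CK: "C \<le> real K" unfolding K_def by linarith
  define Q where "Q = 1 + k * K"
  have Qpos: "Q \<ge> 1" unfolding Q_def by simp
  define N0 where "N0 = 2 * Q * (1 + 2 * k * k)"
  have key: "real_of_int (corr_measure (2 * k) s N) \<ge> (1 / (2 * real Q)) * real N" if "N \<ge> N0" for N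
  proof -
    define m where "m = N div Q"
    have mQ: "m * Q \<le> N" unfolding m_def by simp
    have mge: "real m \<ge> real N / real Q - 1"
    proof -
      have "N mod Q < Q" using Qpos by simp
      moreover have "N = m * Q + N mod Q" unfolding m_def by simp
      ultimately have "N < (m + 1) * Q" by simp
      then have "real N < real ((m + 1) * Q)" by (simp only: of_nat_less_iff)
      then have "real N < (real m + 1) * real Q" by (simp add: algebra_simps)
      then show ?thesis using Qpos by (simp add: field_simps)
    qed
    have "N0 div Q \<le> m" unfolding m_def using that by (rule div_le_mono)
    moreover have "N0 div Q = 2 * (1 + 2 * k * k)" unfolding N0_def using Qpos
      by (simp add: mult.commute mult.left_commute)
    ultimately have "2 * (1 + 2 * k * k) \<le> m" by simp
    then have m_big: "2 * k * k < m" "m \<ge> 1" by auto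
    have "infinite {j. factor s j m = factor s 0 m}" using inf by blast
    then have "\<not> {j. factor s j m = factor s 0 m} \<subseteq> {0}" using finite_subset by blast
    then obtain j0 where "j0 \<in> {j. factor s j m = factor s 0 m}" "j0 > 0" by blast
    then have ex: "\<exists>j. 0 < j \<and> factor s j m = factor s 0 m" by blast
    define p where "p = (LEAST j. 0 < j \<and> factor s j m = factor s 0 m)"
    have p1: "0 < p" "factor s p m = factor s 0 m" using LeastI_ex[OF ex] unfolding p_def by auto
    have p2: "\<forall>l. 0 < l \<and> l < p \<longrightarrow> factor s l m \<noteq> factor s 0 m"
      using not_less_Least unfolding p_def by blast
    have "real (p - 0) \<le> C * real m"
      apply (rule rec[rule_format, of m 0 p]) using m_big p1 p2 by auto
    then have "real p \<le> real K * real m" using CK mult_right_mono[OF CK, of "real m"] by linarith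
    then have "real p \<le> real (K * m)" by simp
    then have pK: "p \<le> K * m" by (simp only: of_nat_le_iff)
    have per: "\<forall>x<m. s x = s (x + p)"
    proof (intro allI impI)
      fix x assume "x < m"
      have "factor s p m ! x = factor s 0 m ! x" using p1 by simp
      then show "s x = s (x + p)" using \<open>x < m\<close> unfolding factor_def by (simp add: add.commute)
    qed
    obtain t where t: "k \<le> t" "t \<le> k * p" "\<forall>x. x + k * k < m \<longrightarrow> s x = s (x + t)"
      using choose_t[OF per assms(3)] p1 by auto
    define D where "D = [0..<k] @ map (\<lambda>i. i + t) [0..<k]"
    define M where "M = m - 2 * k * k"
    have lenD: "length D = 2 * k" unfolding D_def by simp
    have sortD: "sorted_wrt (<) D" unfolding D_def using t(1)
      by (auto simp: sorted_wrt_append sorted_wrt_map)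
    have lastD: "last D = k - 1 + t" unfolding D_def using assms(3)
      by (simp add: last_map)
    have "t \<le> k * K * m" using t(2) mult_le_mono2[OF pK, of k] by (simp only: mult.assoc)
    moreover have "m * Q = m + k * K * m" unfolding Q_def by (simp add: algebra_simps)
    moreover have "k \<le> 2 * k * k" using assms(3) by (simp add: mult.commute)
    ultimately have bound: "M + last D \<le> N" using lastD mQ m_big assms(3) unfolding M_def
      by linarith
    have V: "corrV s M D = int M"
    proof -
      have "(-1::int) ^ (\<Sum>d\<leftarrow>D. s (n + d)) = 1" if "n < M" for n
      proof -
        have eq: "map (\<lambda>i. s (n + (i + t))) [0..<k] = map (\<lambda>i. s (n + i)) [0..<k]"
        proof (rule map_cong)
          fix i assume "i \<in> set [0..<k]"
          then have "i < k" by simp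
          moreover have "k \<le> k * k" using assms(3) by simp
          moreover have "2 * k * k = k * k + k * k" by simp
          ultimately have "n + i + k * k < m" using that unfolding M_def by linarith
          then show "s (n + (i + t)) = s (n + i)" using t(3)[rule_format, of "n+i"] by (simp add: add.assoc)
        qed simp
        have "(\<Sum>d\<leftarrow>D. s (n + d)) = 2 * (\<Sum>i\<leftarrow>[0..<k]. s (n + i))"
          unfolding D_def by (simp add: comp_def eq)
        then show ?thesis by simp
      qed
      then show ?thesis unfolding corrV_def by simp
    qed
    have "int M \<le> corr_measure (2 * k) s N" using corr_ge[OF lenD sortD bound, of s] V by simp
    then have "real M \<le> real_of_int (corr_measure (2 * k) s N)" by linarith
    moreover have "real M = real m - 2 * real k * real k" unfolding M_def using m_big by simp
    moreover have "real N / (2 * real Q) \<ge> 1 + 2 * real k * real k"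
    proof -
      have "real N \<ge> real N0" using that by simp
      then have "real N \<ge> 2 * real Q * (1 + 2 * real k * real k)" unfolding N0_def by (simp add: algebra_simps)
      then show ?thesis using Qpos by (simp add: field_simps)
    qed
    moreover have "real N / real Q = 2 * (real N / (2 * real Q))" by simp
    ultimately have "real_of_int (corr_measure (2 * k) s N) \<ge> real N / (2 * real Q)"
      using mge by linarith
    then show ?thesis by simp
  qed
  have "1 / (2 * real Q) > 0" using Qpos by simp
  then show ?thesis using key by (intro exI[of _ "1 / (2 * real Q)"] conjI exI[of _ N0]) auto
qed

end
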